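(* Let $T$ be the $H_3(\mathbb R)$-odometer associated with a nested sequence $\Gamma_1\supset\Gamma_2\supset\cdots$ of lattices in $H_3(\mathbb R)$ such that each $\Gamma_n$ is normal in $\Gamma_1$. If $T$ is free, then $\bigcap_{n=1}^\infty p(\Gamma_n)=\{0\}$.
   Context: $H_3(\mathbb R)$: real $3\times3$ upper triangular unipotent matrices; for $g$ with $(1,2)$ entry $t_1$ and $(2,3)$ entry $t_2$, $p(g)=(t_1,t_2)\in\mathbb R^2$. A lattice is a discrete subgroup of finite covolume. The odometer is the left-translation action on $\varprojlim H_3(\mathbb R)/\Gamma_j$ with the inverse limit of the invariant probabilities. Free: a.e. point has trivial stability group. *)

theory Defs
  imports "HOL-Probability.Probability"
begin

text \<open>The Heisenberg group H_3(R): the unipotent upper triangular matrix with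
(1,2) entry a, (2,3) entry b and (1,3) entry c is encoded as the triple (a,b,c).
Its topology and Haar measure are those of R^3 (lborel) in these coordinates.\<close>

type_synonym h3 = "real \<times> real \<times> real"

fun h3_mult :: "h3 \<Rightarrow> h3 \<Rightarrow> h3" where
  "h3_mult (a, b, c) (a', b', c') = (a + a', b + b', c + c' + a * b')"

fun h3_inv :: "h3 \<Rightarrow> h3" where
  "h3_inv (a, b, c) = (- a, - b, a * b - c)"

definition h3_one :: h3 where
  "h3_one = (0, 0, 0)"

fun h3_p :: "h3 \<Rightarrow> real \<times> real" where
  "h3_p (a, b, c) = (a, b)"

definition h3_subgroup :: "h3 set \<Rightarrow> bool" where
  "h3_subgroup G \<longleftrightarrow> h3_one \<in> G \<and> (\<forall>x\<in>G. \<forall>y\<in>G. h3_mult x y \<in> G)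
     \<and> (\<forall>x\<in>G. h3_inv x \<in> G)"

text \<open>Lattice: discrete subgroup of finite covolume (there is a Borel set of finite
Haar measure whose right translates by the subgroup cover the group).\<close>
definition h3_lattice :: "h3 set \<Rightarrow> bool" where
  "h3_lattice G \<longleftrightarrow> h3_subgroup G
     \<and> (\<exists>\<epsilon>>0. \<forall>\<gamma>\<in>G. \<gamma> \<noteq> h3_one \<longrightarrow> dist \<gamma> h3_one \<ge> \<epsilon>)
     \<and> (\<exists>F \<in> sets lborel. emeasure lborel F < \<infinity>
          \<and> (\<forall>g. \<exists>f\<in>F. \<exists>\<gamma>\<in>G. g = h3_mult f \<gamma>))"

definition h3_normal_in :: "h3 set \<Rightarrow> h3 set \<Rightarrow> bool" where
  "h3_normal_in N G \<longleftrightarrow> (\<forall>g\<in>G. \<forall>n\<in>N. h3_mult (h3_mult g n) (h3_inv g) \<in> N)"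

text \<open>Left cosets g Gamma, i.e. the points of H_3(R)/Gamma.\<close>
definition h3_cosets :: "h3 set \<Rightarrow> h3 set set" where
  "h3_cosets G = {h3_mult g ` G | g. True}"

text \<open>Points of the inverse limit of H_3(R)/Gamma_j.\<close>
definition odo_space :: "(nat \<Rightarrow> h3 set) \<Rightarrow> (nat \<Rightarrow> h3 set) set" where
  "odo_space \<Gamma> = {x. \<forall>j. x j \<in> h3_cosets (\<Gamma> j) \<and> x (Suc j) \<subseteq> x j}"

text \<open>Borel sets of H_3(R)/Gamma: sets of cosets whose union is Borel.\<close>
definition quot_borel :: "h3 set \<Rightarrow> h3 set set set" where
  "quot_borel G = {S. S \<subseteq> h3_cosets G \<and> \<Union>S \<in> sets borel}"

definition odo_sigma :: "(nat \<Rightarrow> h3 set) \<Rightarrow> (nat \<Rightarrow> h3 set) measure" where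
  "odo_sigma \<Gamma> = sigma (odo_space \<Gamma>)
     {{x \<in> odo_space \<Gamma>. x j \<in> S} | j S. S \<in> quot_borel (\<Gamma> j)}"

definition odo_act :: "h3 \<Rightarrow> (nat \<Rightarrow> h3 set) \<Rightarrow> (nat \<Rightarrow> h3 set)" where
  "odo_act g x = (\<lambda>j. h3_mult g ` x j)"

definition odo_stab :: "(nat \<Rightarrow> h3 set) \<Rightarrow> h3 set" where
  "odo_stab x = {g. odo_act g x = x}"

text \<open>The odometer measure: a probability on the inverse limit whose image on each
H_3(R)/Gamma_j is the (unique) H_3(R)-invariant probability; such a measure is unique,
so this is the inverse limit of the invariant probabilities.\<close>
definition odo_measure :: "(nat \<Rightarrow> h3 set) \<Rightarrow> (nat \<Rightarrow> h3 set) measure \<Rightarrow> bool" where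
  "odo_measure \<Gamma> \<nu> \<longleftrightarrow> space \<nu> = odo_space \<Gamma> \<and> sets \<nu> = sets (odo_sigma \<Gamma>)
     \<and> prob_space \<nu>
     \<and> (\<forall>j g S. S \<in> quot_borel (\<Gamma> j) \<longrightarrow>
          measure \<nu> {x \<in> odo_space \<Gamma>. x j \<in> (\<lambda>C. h3_mult g ` C) ` S}
            = measure \<nu> {x \<in> odo_space \<Gamma>. x j \<in> S})"

definition odo_free :: "(nat \<Rightarrow> h3 set) \<Rightarrow> bool" where
  "odo_free \<Gamma> \<longleftrightarrow> (\<exists>\<nu>. odo_measure \<Gamma> \<nu> \<and> (AE x in \<nu>. odo_stab x = {h3_one}))"

end

theory Submission
  imports Defs
begin


lemma trans1:
  fixes t :: real assumes "C \<in> sets borel"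
  shows "emeasure lborel ((\<lambda>z. z + t) -` C) = emeasure lborel C"
proof -
  have "emeasure (distr lborel borel ((+) t)) C = emeasure lborel C"
    by (simp add: lborel_distr_plus)
  moreover have "emeasure (distr lborel borel ((+) t)) C = emeasure lborel ((+) t -` C \<inter> space lborel)"
    using assms by (intro emeasure_distr) auto
  moreover have "(\<lambda>z. z + t) = (+) t" by (auto simp: add.commute)
  ultimately show ?thesis by simp
qed

lemma trans2:
  fixes c m :: real assumes B: "B \<in> sets (borel :: (real \<times> real) measure)"
  shows "emeasure lborel ((\<lambda>(y,z). (y, z + (c + m*y))) -` B) = emeasure lborel B"
proof -
  let ?S = "(\<lambda>(y,z). (y, z + (c + m*y))) :: real\<times>real \<Rightarrow> real\<times>real"
  have Sm: "?S \<in> borel_measurable borel"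
  proof -
    have "?S = (\<lambda>p. (fst p, snd p + (c + m * fst p)))" by auto
    moreover have "continuous_on UNIV (\<lambda>p::real\<times>real. (fst p, snd p + (c + m * fst p)))"
      by (intro continuous_intros)
    ultimately show ?thesis by (metis borel_measurable_continuous_onI)
  qed
  have L: "sets (lborel \<Otimes>\<^sub>M lborel) = sets (borel :: (real\<times>real) measure)"
    by (subst lborel_prod) simp
  have Bl: "B \<in> sets (lborel \<Otimes>\<^sub>M lborel)" using B L by simp
  have Sl: "?S -` B \<in> sets (lborel \<Otimes>\<^sub>M lborel)"
    using measurable_sets[OF Sm B] L by simp
  have "emeasure lborel (?S -` B) = emeasure (lborel \<Otimes>\<^sub>M lborel) (?S -` B)"
    by (simp add: lborel_prod)
  also have "\<dots> = (\<integral>\<^sup>+y. emeasure lborel (Pair y -` (?S -` B)) \<partial>lborel)"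
    by (rule lborel.emeasure_pair_measure_alt[OF Sl])
  also have "\<dots> = (\<integral>\<^sup>+y. emeasure lborel (Pair y -` B) \<partial>lborel)"
  proof (intro nn_integral_cong)
    fix y :: real
    have e: "Pair y -` (?S -` B) = (\<lambda>z. z + (c + m*y)) -` (Pair y -` B)" by auto
    have "Pair y -` B \<in> sets borel"
      using sets_Pair1[OF Bl] by simp
    then show "emeasure lborel (Pair y -` (?S -` B)) = emeasure lborel (Pair y -` B)"
      unfolding e by (rule trans1)
  qed
  also have "\<dots> = emeasure (lborel \<Otimes>\<^sub>M lborel) B"
    by (rule lborel.emeasure_pair_measure_alt[OF Bl, symmetric])
  finally show ?thesis by (simp add: lborel_prod)
qed

lemma transE:
  fixes t :: "'a::euclidean_space" assumes "C \<in> sets borel"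
  shows "emeasure lborel ((+) t -` C) = emeasure lborel C"
proof -
  have 1: "emeasure (distr lborel borel ((+) t)) C = emeasure lborel C"
    by (simp only: lborel_distr_plus)
  have 2: "emeasure (distr lborel borel ((+) t)) C = emeasure lborel ((+) t -` C \<inter> space lborel)"
    using assms by (intro emeasure_distr) auto
  show ?thesis using 1 2 by simp
qed
lemma shear3:
  fixes al be c la mu :: real
  assumes A: "A \<in> sets (borel :: (real\<times>real\<times>real) measure)"
  shows "emeasure lborel ((\<lambda>(x,y,z). (x+al, y+be, z+c+la*x+mu*y)) -` A) = emeasure lborel A"
proof -
  let ?A = "(+) (al,be,c) -` A"
  have A': "?A \<in> sets borel"
    using measurable_sets[OF _ A, of "(+) (al,be,c)" borel] by simp
  have eA: "emeasure lborel ?A = emeasure lborel A" by (rule transE[OF A])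
  let ?S = "(\<lambda>(x,y,z). (x,y,z+(la*x+mu*y))) :: real\<times>real\<times>real \<Rightarrow> real\<times>real\<times>real"
  have eq: "(\<lambda>(x,y,z). (x+al, y+be, z+c+la*x+mu*y)) -` A = ?S -` ?A"
  proof -
    have "\<And>p. (\<lambda>(x,y,z). (x+al, y+be, z+c+la*x+mu*y)) p = (+) (al,be,c) (?S p)"
    proof -
      fix p :: "real\<times>real\<times>real"
      obtain x y z where p: "p = (x,y,z)" by (cases p) auto
      show "(\<lambda>(x,y,z). (x+al, y+be, z+c+la*x+mu*y)) p = (+) (al,be,c) (?S p)"
        unfolding p by simp
    qed
    then show ?thesis by (simp add: vimage_def)
  qed
  have Sm: "?S \<in> borel_measurable borel"
  proof -
    have e: "?S = (\<lambda>p. (fst p, fst (snd p), snd (snd p) + (la * fst p + mu * fst (snd p))))" by auto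
    have c: "continuous_on UNIV (\<lambda>p::real\<times>real\<times>real. (fst p, fst (snd p), snd (snd p) + (la * fst p + mu * fst (snd p))))"
      by (intro continuous_intros)
    show ?thesis by (subst e) (rule borel_measurable_continuous_onI[OF c])
  qed
  have L: "sets (lborel \<Otimes>\<^sub>M lborel) = sets (borel :: (real\<times>real\<times>real) measure)"
    by (subst lborel_prod) simp
  have Al: "?A \<in> sets (lborel \<Otimes>\<^sub>M lborel)" using A' L by simp
  have Sl: "?S -` ?A \<in> sets (lborel \<Otimes>\<^sub>M lborel)"
    using measurable_sets[OF Sm A'] L by simp
  have "emeasure lborel (?S -` ?A) = emeasure (lborel \<Otimes>\<^sub>M lborel) (?S -` ?A)"
    by (simp add: lborel_prod)
  also have "\<dots> = (\<integral>\<^sup>+x. emeasure lborel (Pair x -` (?S -` ?A)) \<partial>lborel)"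
    by (rule lborel.emeasure_pair_measure_alt[OF Sl])
  also have "\<dots> = (\<integral>\<^sup>+x. emeasure lborel (Pair x -` ?A) \<partial>lborel)"
  proof (intro nn_integral_cong)
    fix x :: real
    have e: "Pair x -` (?S -` ?A) = (\<lambda>(y,z). (y, z + (la*x + mu*y))) -` (Pair x -` ?A)" by auto
    have "Pair x -` ?A \<in> sets borel"
      using sets_Pair1[OF Al] by simp
    then show "emeasure lborel (Pair x -` (?S -` ?A)) = emeasure lborel (Pair x -` ?A)"
      unfolding e by (rule trans2)
  qed
  also have "\<dots> = emeasure (lborel \<Otimes>\<^sub>M lborel) ?A"
    by (rule lborel.emeasure_pair_measure_alt[OF Al, symmetric])
  finally show ?thesis using eq eA by (simp add: lborel_prod)
qed


lemma h3_mult_eq: "h3_mult p q = (fst p + fst q, fst (snd p) + fst (snd q),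
   snd (snd p) + snd (snd q) + fst p * fst (snd q))"
  by (cases p; cases q) auto

lemma h3_inv_eq: "h3_inv p = (- fst p, - fst (snd p), fst p * fst (snd p) - snd (snd p))"
  by (cases p) auto

lemma h3_p_eq: "h3_p p = (fst p, fst (snd p))"
  by (cases p) auto

lemma h3_assoc: "h3_mult (h3_mult p q) r = h3_mult p (h3_mult q r)"
  by (simp add: h3_mult_eq algebra_simps)

lemma h3_inv_l: "h3_mult (h3_inv p) p = h3_one"
  by (simp add: h3_mult_eq h3_inv_eq h3_one_def)

lemma h3_inv_r: "h3_mult p (h3_inv p) = h3_one"
  by (simp add: h3_mult_eq h3_inv_eq h3_one_def)

lemma h3_one_l: "h3_mult h3_one p = p"
  by (simp add: h3_mult_eq h3_one_def)

lemma h3_one_r: "h3_mult p h3_one = p"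
  by (simp add: h3_mult_eq h3_one_def)

lemma h3_cancel_l: "h3_mult p q = h3_mult p r \<Longrightarrow> q = r"
  by (metis h3_assoc h3_inv_l h3_one_l)

lemma h3_eq_inv: "h3_mult (h3_inv p) q = h3_one \<Longrightarrow> q = p"
  by (metis h3_assoc h3_inv_r h3_one_l h3_one_r)

definition aff :: "real \<Rightarrow> real \<Rightarrow> real \<Rightarrow> real \<Rightarrow> real \<Rightarrow> h3 \<Rightarrow> h3" where
  "aff al be c la mu = (\<lambda>(x,y,z). (x+al, y+be, z+c+la*x+mu*y))"

lemma aff_meas: "aff al be c la mu \<in> borel_measurable borel"
proof -
  have e: "aff al be c la mu = (\<lambda>p. (fst p + al, fst (snd p) + be, snd (snd p) + c + la * fst p + mu * fst (snd p)))"
    by (auto simp: aff_def)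
  have c: "continuous_on UNIV (\<lambda>p::h3. (fst p + al, fst (snd p) + be, snd (snd p) + c + la * fst p + mu * fst (snd p)))"
    by (intro continuous_intros)
  show ?thesis by (subst e) (rule borel_measurable_continuous_onI[OF c])
qed

lemma aff_pres: "A \<in> sets borel \<Longrightarrow> emeasure lborel (aff al be c la mu -` A) = emeasure lborel A"
  unfolding aff_def by (rule shear3)

lemma aff_sets: "A \<in> sets borel \<Longrightarrow> aff al be c la mu -` A \<in> sets borel"
  using measurable_sets[OF aff_meas, of A] by simp

lemma lmul_aff: "(\<lambda>q. h3_mult p q) = aff (fst p) (fst (snd p)) (snd (snd p)) 0 (fst p)"
  by (auto simp: aff_def h3_mult_eq algebra_simps)

lemma rmul_aff: "(\<lambda>q. h3_mult q p) = aff (fst p) (fst (snd p)) (snd (snd p)) (fst (snd p)) 0"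
  by (auto simp: aff_def h3_mult_eq algebra_simps)

lemma sub_one: "h3_subgroup G \<Longrightarrow> h3_one \<in> G" by (simp add: h3_subgroup_def)
lemma sub_mult: "h3_subgroup G \<Longrightarrow> x \<in> G \<Longrightarrow> y \<in> G \<Longrightarrow> h3_mult x y \<in> G" by (simp add: h3_subgroup_def)
lemma sub_inv: "h3_subgroup G \<Longrightarrow> x \<in> G \<Longrightarrow> h3_inv x \<in> G" by (simp add: h3_subgroup_def)

lemma central_not_free:
  assumes sub: "\<And>n. h3_subgroup (\<Gamma> n)" and e: "e \<noteq> 0"
    and zin: "\<And>n. (0,0,e) \<in> \<Gamma> n" and free: "odo_free \<Gamma>"
  shows False
proof -
  let ?z = "(0::real,0::real,e)"
  obtain \<nu> where om: "odo_measure \<Gamma> \<nu>" and ae: "AE x in \<nu>. odo_stab x = {h3_one}"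
    using free unfolding odo_free_def by blast
  have sp: "space \<nu> = odo_space \<Gamma>" and ps: "prob_space \<nu>"
    using om unfolding odo_measure_def by auto
  have cen: "\<And>q. h3_mult ?z q = h3_mult q ?z" by (simp add: h3_mult_eq)
  have stab: "?z \<in> odo_stab x" if x: "x \<in> odo_space \<Gamma>" for x
  proof -
    have "h3_mult ?z ` x j = x j" for j
    proof -
      from x have "x j \<in> h3_cosets (\<Gamma> j)" by (simp add: odo_space_def)
      then obtain g where xj: "x j = h3_mult g ` \<Gamma> j" by (auto simp: h3_cosets_def)
      have zG: "h3_mult ?z ` \<Gamma> j = \<Gamma> j"
      proof
        show "h3_mult ?z ` \<Gamma> j \<subseteq> \<Gamma> j" using sub_mult[OF sub zin] by auto
        show "\<Gamma> j \<subseteq> h3_mult ?z ` \<Gamma> j"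
        proof
          fix y assume y: "y \<in> \<Gamma> j"
          have "h3_mult (h3_inv ?z) y \<in> \<Gamma> j" using sub_mult[OF sub sub_inv[OF sub zin] y] .
          moreover have "y = h3_mult ?z (h3_mult (h3_inv ?z) y)"
            by (metis h3_assoc h3_inv_r h3_one_l)
          ultimately show "y \<in> h3_mult ?z ` \<Gamma> j" by blast
        qed
      qed
      have "h3_mult ?z ` x j = h3_mult g ` (h3_mult ?z ` \<Gamma> j)"
        unfolding xj image_image
        by (intro image_cong refl) (metis cen h3_assoc)
      then show ?thesis using zG xj by simp
    qed
    then show ?thesis by (simp add: odo_stab_def odo_act_def)
  qed
  have "AE x in \<nu>. False"
    using ae AE_space
  proof (eventually_elim)
    case (elim x)
    then have "?z \<in> odo_stab x" using stab sp by auto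
    with elim show False using e by (auto simp: h3_one_def)
  qed
  then obtain N where N: "{x \<in> space \<nu>. \<not> False} \<subseteq> N" "emeasure \<nu> N = 0" "N \<in> sets \<nu>"
    by (rule AE_E)
  then have "emeasure \<nu> (space \<nu>) \<le> emeasure \<nu> N" by (intro emeasure_mono) auto
  then show False using N prob_space.emeasure_space_1[OF ps] by simp
qed


lemma norm3: "dist (p::h3) h3_one \<le> \<bar>fst p\<bar> + \<bar>fst (snd p)\<bar> + \<bar>snd (snd p)\<bar>"
proof -
  obtain x y z where p: "p = (x,y,z)" by (cases p) auto
  have "dist p h3_one = norm (x,(y,z))" by (simp add: p h3_one_def dist_norm zero_prod_def[symmetric])
  also have "\<dots> \<le> norm x + norm (y,z)" by (rule norm_Pair_le)
  also have "norm (y,z) \<le> norm y + norm z" by (rule norm_Pair_le)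
  finally show ?thesis by (simp add: p)
qed

lemma disc_iso:
  assumes sub: "h3_subgroup G" and ep: "\<epsilon> > 0"
    and disc: "\<forall>\<gamma>\<in>G. \<gamma> \<noteq> h3_one \<longrightarrow> dist \<gamma> h3_one \<ge> \<epsilon>"
    and g: "g \<in> G" and g': "g' \<in> G" and d: "dist g g' < \<epsilon> / (3 + \<bar>fst g\<bar>)"
  shows "g' = g"
proof -
  let ?q = "h3_mult (h3_inv g) g'"
  have qG: "?q \<in> G" using sub_mult[OF sub sub_inv[OF sub g] g'] .
  let ?d = "dist g g'"
  have d1: "\<bar>fst g - fst g'\<bar> \<le> ?d" using dist_fst_le[of g g'] by (simp add: dist_real_def)
  have ds: "dist (snd g) (snd g') \<le> ?d" by (rule dist_snd_le)
  have d2: "\<bar>fst (snd g) - fst (snd g')\<bar> \<le> ?d"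
    using dist_fst_le[of "snd g" "snd g'"] ds by (simp add: dist_real_def)
  have d3: "\<bar>snd (snd g) - snd (snd g')\<bar> \<le> ?d"
    using dist_snd_le[of "snd g" "snd g'"] ds by (simp add: dist_real_def)
  have q: "?q = (fst g' - fst g, fst (snd g') - fst (snd g),
       (snd (snd g') - snd (snd g)) - fst g * (fst (snd g') - fst (snd g)))"
    by (simp add: h3_mult_eq h3_inv_eq algebra_simps)
  have "dist ?q h3_one \<le> \<bar>fst g' - fst g\<bar> + \<bar>fst (snd g') - fst (snd g)\<bar> +
       \<bar>(snd (snd g') - snd (snd g)) - fst g * (fst (snd g') - fst (snd g))\<bar>"
    using norm3[of ?q] by (simp add: q)
  also have "\<dots> \<le> ?d + ?d + (?d + \<bar>fst g\<bar> * ?d)"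
  proof -
    have "\<bar>fst g * (fst (snd g') - fst (snd g))\<bar> \<le> \<bar>fst g\<bar> * ?d"
      using d2 by (simp add: abs_mult mult_left_mono abs_minus_commute)
    then show ?thesis using d1 d2 d3 by (simp add: abs_minus_commute) linarith?
  qed
  also have "\<dots> = (3 + \<bar>fst g\<bar>) * ?d" by (simp add: algebra_simps)
  also have "\<dots> < \<epsilon>" using d by (simp add: pos_less_divide_eq mult.commute)
  finally have "dist ?q h3_one < \<epsilon>" .
  then have "?q = h3_one" using disc qG by force
  then show ?thesis by (rule h3_eq_inv)
qed

lemma disc_countable:
  assumes sub: "h3_subgroup G" and ep: "\<epsilon> > 0"
    and disc: "\<forall>\<gamma>\<in>G. \<gamma> \<noteq> h3_one \<longrightarrow> dist \<gamma> h3_one \<ge> \<epsilon>"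
  shows "countable G"
proof -
  define r where "r g = \<epsilon> / (3 + \<bar>fst g\<bar>)" for g :: h3
  have rpos: "r g > 0" for g unfolding r_def using ep by (simp add: add_pos_nonneg)
  have iso: "g' = g" if "g \<in> G" "g' \<in> G" "dist g g' < r g" for g g'
    using disc_iso[OF sub ep disc that(1,2)] that(3) unfolding r_def by simp
  define B where "B g = ball g (r g / 2)" for g
  have eqB: "g = g'" if "g \<in> G" "g' \<in> G" "x \<in> B g" "x \<in> B g'" for g g' x
  proof -
    have "dist g g' < r g / 2 + r g' / 2"
      using that(3,4) dist_triangle[of g g' x] unfolding B_def by (simp add: dist_commute)
    then have "dist g g' < r g \<or> dist g' g < r g'" by (auto simp: dist_commute)
    then show ?thesis using iso that(1,2) by metis
  qed
  have "countable (B ` G)"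
  proof (rule countable_disjoint_open_subsets)
    show "open S" if "S \<in> B ` G" for S using that unfolding B_def by auto
    show "pairwise disjnt (B ` G)"
      unfolding pairwise_def disjnt_def
      using eqB by blast
  qed
  moreover have "inj_on B G"
  proof (rule inj_onI)
    fix g g' assume gg: "g \<in> G" "g' \<in> G" "B g = B g'"
    have "g \<in> B g" unfolding B_def using rpos by simp
    then show "g = g'" using eqB[OF gg(1,2)] gg(3) by simp
  qed
  ultimately show ?thesis by (rule countable_image_inj_on)
qed


lemma h3_rcancel: "h3_mult (h3_mult f g) (h3_inv g) = f"
  by (simp add: h3_mult_eq h3_inv_eq algebra_simps)

lemma h3_conj_id: "h3_mult (h3_inv (h3_mult (h3_inv X) (h3_mult f g))) (h3_mult (h3_inv X) (h3_mult f g'))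
   = h3_mult (h3_inv g) g'"
  by (simp add: h3_mult_eq h3_inv_eq algebra_simps)

lemma B0_measure:
  fixes d :: real assumes "d > 0"
  shows "emeasure (lborel :: h3 measure) ({0<..<d} \<times> {0<..<d} \<times> {0<..<d}) = ennreal (d^3)"
proof -
  have "emeasure (lborel :: h3 measure) ({0<..<d} \<times> {0<..<d} \<times> {0<..<d})
     = emeasure (lborel \<Otimes>\<^sub>M lborel) ({0<..<d} \<times> ({0<..<d} \<times> {0<..<d}))"
    by (simp add: lborel_prod)
  also have "\<dots> = emeasure lborel {0<..<d} * emeasure lborel ({0<..<d} \<times> {0<..<d::real})"
    by (rule lborel.emeasure_pair_measure_Times) (auto intro!: borel_open open_Times)
  also have "emeasure (lborel :: (real\<times>real) measure) ({0<..<d} \<times> {0<..<d::real})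
     = emeasure (lborel \<Otimes>\<^sub>M lborel) ({0<..<d} \<times> {0<..<d::real})"
    by (simp add: lborel_prod)
  also have "\<dots> = emeasure lborel {0<..<d} * emeasure lborel {0<..<d::real}"
    by (rule lborel.emeasure_pair_measure_Times) (auto intro!: borel_open open_Times)
  finally show ?thesis using assms by (simp add: ennreal_mult[symmetric] power3_eq_cube)
qed


lemma lattice_phi:
  assumes lat: "h3_lattice G" and ab: "(a,b) \<noteq> (0::real,0::real)"
  shows "\<exists>\<gamma>\<in>G. b * fst \<gamma> - a * fst (snd \<gamma>) \<noteq> 0"
proof (rule ccontr)
  assume "\<not> ?thesis"
  then have phi0: "\<And>\<gamma>. \<gamma> \<in> G \<Longrightarrow> b * fst \<gamma> - a * fst (snd \<gamma>) = 0" by auto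
  have sub: "h3_subgroup G" using lat by (simp add: h3_lattice_def)
  obtain \<epsilon> where ep: "\<epsilon> > 0" and disc: "\<forall>\<gamma>\<in>G. \<gamma> \<noteq> h3_one \<longrightarrow> dist \<gamma> h3_one \<ge> \<epsilon>"
    using lat by (auto simp: h3_lattice_def)
  obtain F where Fs: "F \<in> sets lborel" and Ff: "emeasure lborel F < \<infinity>"
    and cover: "\<And>g. \<exists>f\<in>F. \<exists>\<gamma>\<in>G. g = h3_mult f \<gamma>"
    using lat unfolding h3_lattice_def by blast
  have Fb: "F \<in> sets borel" using Fs by simp
  have cG: "countable G" by (rule disc_countable[OF sub ep disc])
  define \<phi> where "\<phi> p = b * fst p - a * fst (snd p)" for p :: h3
  have phim: "\<phi> (h3_mult p q) = \<phi> p + \<phi> q" for p q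
    by (simp add: \<phi>_def h3_mult_eq algebra_simps)
  define cc where "cc = a^2 + b^2"
  have ccpos: "cc > 0" using ab unfolding cc_def by (simp add: sum_power2_gt_zero_iff)
  define \<delta> where "\<delta> = min 1 (\<epsilon>/5)"
  have dpos: "\<delta> > 0" and d1: "\<delta> \<le> 1" and de: "\<delta> \<le> \<epsilon>/5" using ep by (auto simp: \<delta>_def)
  define M where "M = 2 * (\<bar>a\<bar> + \<bar>b\<bar>) * \<delta> + 1"
  define g where "g k = (real k * M * b / cc, - (real k * M * a / cc), 0::real)" for k :: nat
  have phig: "\<phi> (g k) = real k * M" for k
  proof -
    have "\<phi> (g k) = real k * M * ((a^2+b^2) / cc)"
      by (simp add: \<phi>_def g_def power2_eq_square algebra_simps add_divide_distrib)
    moreover have q: "(a^2+b^2) / cc = 1" using ccpos unfolding cc_def by (metis divide_self less_irrefl)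
    ultimately show ?thesis unfolding q by simp
  qed
  define B0 where "B0 = {0<..<\<delta>} \<times> {0<..<\<delta>} \<times> {0<..<\<delta>}"
  have B0b: "B0 \<in> sets borel" unfolding B0_def by (auto intro!: borel_open open_Times)
  have mB0: "emeasure lborel B0 = ennreal (\<delta>^3)" unfolding B0_def by (rule B0_measure[OF dpos])
  have phiB0: "\<bar>\<phi> p\<bar> \<le> (\<bar>a\<bar> + \<bar>b\<bar>) * \<delta>" if "p \<in> B0" for p
  proof -
    have h: "0 < fst p" "fst p < \<delta>" "0 < fst (snd p)" "fst (snd p) < \<delta>"
      using that by (auto simp: B0_def)
    have "\<bar>b * fst p - a * fst (snd p)\<bar> \<le> \<bar>b * fst p\<bar> + \<bar>a * fst (snd p)\<bar>" by (rule abs_triangle_ineq4)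
    moreover have "\<bar>b * fst p\<bar> \<le> \<bar>b\<bar> * \<delta>" using h by (simp add: abs_mult mult_left_mono)
    moreover have "\<bar>a * fst (snd p)\<bar> \<le> \<bar>a\<bar> * \<delta>" using h by (simp add: abs_mult mult_left_mono)
    ultimately show ?thesis unfolding \<phi>_def by (simp add: distrib_right)
  qed
  define Bk where "Bk k = (\<lambda>q. h3_mult (h3_inv (g k)) q) -` B0" for k
  have Bkb: "Bk k \<in> sets borel" for k unfolding Bk_def lmul_aff by (rule aff_sets[OF B0b])
  have mBk: "emeasure lborel (Bk k) = ennreal (\<delta>^3)" for k
    unfolding Bk_def lmul_aff by (simp add: aff_pres[OF B0b] mB0)
  define \<iota> where "\<iota> = to_nat_on G"
  define dec where "dec = from_nat_into G"
  have decI: "dec (\<iota> \<gamma>) = \<gamma>" if "\<gamma> \<in> G" for \<gamma>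
    using that cG by (simp add: dec_def \<iota>_def)
  define A where "A k n = (if n \<in> \<iota> ` G then {f \<in> F. h3_mult f (dec n) \<in> Bk k} else {})" for k n
  define C where "C k n = (if n \<in> \<iota> ` G then Bk k \<inter> (\<lambda>q. h3_mult q (h3_inv (dec n))) -` F else {})" for k n
  have Ab: "A k n \<in> sets lborel" for k n
  proof -
    have "{f \<in> F. h3_mult f (dec n) \<in> Bk k} = F \<inter> (\<lambda>f. h3_mult f (dec n)) -` Bk k" by auto
    then show ?thesis unfolding A_def rmul_aff using Fb aff_sets[OF Bkb] by auto
  qed
  have Cb: "C k n \<in> sets lborel" for k n
    unfolding C_def rmul_aff using Bkb aff_sets[OF Fb] by auto
  have AF: "A k n \<subseteq> F" for k n by (auto simp: A_def)
  have mCA: "emeasure lborel (C k n) = emeasure lborel (A k n)" for k n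
  proof (cases "n \<in> \<iota> ` G")
    case True
    let ?\<gamma> = "dec n"
    have "A k n = (\<lambda>f. h3_mult f ?\<gamma>) -` C k n"
      using True unfolding A_def C_def by (auto simp: h3_rcancel vimage_def)
    moreover have "C k n \<in> sets borel" using Cb by simp
    ultimately show ?thesis unfolding rmul_aff by (simp add: aff_pres)
  next
    case False then show ?thesis by (simp add: A_def C_def)
  qed
  have covk: "Bk k \<subseteq> (\<Union>n. C k n)" for k
  proof
    fix q assume q: "q \<in> Bk k"
    obtain f \<gamma> where f: "f \<in> F" "\<gamma> \<in> G" "q = h3_mult f \<gamma>" using cover by blast
    have "h3_mult q (h3_inv \<gamma>) = f" using f(3) by (simp add: h3_assoc h3_inv_r h3_one_r)
    then have "q \<in> C k (\<iota> \<gamma>)" using q f unfolding C_def by (simp add: decI)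
    then show "q \<in> (\<Union>n. C k n)" by blast
  qed
  have Bk_le: "ennreal (\<delta>^3) \<le> (\<Sum>n. emeasure lborel (A k n))" for k
  proof -
    have "ennreal (\<delta>^3) = emeasure lborel (Bk k)" by (simp add: mBk)
    also have "\<dots> \<le> emeasure lborel (\<Union>n. C k n)"
      by (rule emeasure_mono[OF covk]) (use Cb in auto)
    also have "\<dots> \<le> (\<Sum>n. emeasure lborel (C k n))"
      by (rule emeasure_subadditive_countably) (use Cb in auto)
    finally show ?thesis by (simp add: mCA)
  qed
  have disj: "k = l \<and> n = n'" if f1: "f \<in> A k n" and f2: "f \<in> A l n'" for f k l n n'
  proof -
    have lmI: "h3_mult X (h3_mult (h3_inv X) y) = y" for X y
      by (simp add: h3_mult_eq h3_inv_eq algebra_simps)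
    from f1 obtain \<gamma> where \<gamma>: "\<gamma> \<in> G" "n = \<iota> \<gamma>" and m1: "h3_mult f \<gamma> \<in> Bk k"
      unfolding A_def by (auto split: if_splits simp: decI)
    from f2 obtain \<gamma>' where \<gamma>': "\<gamma>' \<in> G" "n' = \<iota> \<gamma>'" and m2: "h3_mult f \<gamma>' \<in> Bk l"
      unfolding A_def by (auto split: if_splits simp: decI)
    define p where "p = h3_mult (h3_inv (g k)) (h3_mult f \<gamma>)"
    define p' where "p' = h3_mult (h3_inv (g l)) (h3_mult f \<gamma>')"
    have pB: "p \<in> B0" using m1 unfolding p_def Bk_def by simp
    have pB': "p' \<in> B0" using m2 unfolding p'_def Bk_def by simp
    have "\<phi> f = \<phi> (h3_mult f \<gamma>)" using phim phi0[OF \<gamma>(1)] by (simp add: \<phi>_def)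
    also have "h3_mult f \<gamma> = h3_mult (g k) p" unfolding p_def by (simp add: lmI)
    finally have e1: "\<phi> f = real k * M + \<phi> p" by (simp add: phim phig)
    have "\<phi> f = \<phi> (h3_mult f \<gamma>')" using phim phi0[OF \<gamma>'(1)] by (simp add: \<phi>_def)
    also have "h3_mult f \<gamma>' = h3_mult (g l) p'" unfolding p'_def by (simp add: lmI)
    finally have e2: "\<phi> f = real l * M + \<phi> p'" by (simp add: phim phig)
    have "\<bar>(real k - real l) * M\<bar> \<le> 2 * (\<bar>a\<bar> + \<bar>b\<bar>) * \<delta>"
      using e1 e2 phiB0[OF pB] phiB0[OF pB'] by (simp add: algebra_simps)
    moreover have Mlt: "2 * (\<bar>a\<bar> + \<bar>b\<bar>) * \<delta> < M" unfolding M_def by simp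
    moreover have Mpos: "M > 0" unfolding M_def using dpos by (simp add: add_nonneg_pos)
    ultimately have h: "\<bar>real k - real l\<bar> * M < 1 * M"
      using abs_mult[of "real k - real l" M] abs_of_pos[OF Mpos] by linarith
    have "\<bar>real k - real l\<bar> < 1" using mult_right_less_imp_less[OF h] Mpos by simp
    then have kl: "k = l" by linarith
    have q: "h3_mult (h3_inv p) p' = h3_mult (h3_inv \<gamma>) \<gamma>'"
      unfolding p_def p'_def kl by (rule h3_conj_id)
    have qG: "h3_mult (h3_inv \<gamma>) \<gamma>' \<in> G" using sub_mult[OF sub sub_inv[OF sub \<gamma>(1)] \<gamma>'(1)] .
    have hp: "0 < fst p" "fst p < \<delta>" "0 < fst (snd p)" "fst (snd p) < \<delta>" "0 < snd (snd p)" "snd (snd p) < \<delta>"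
      using pB by (auto simp: B0_def)
    have hp': "0 < fst p'" "fst p' < \<delta>" "0 < fst (snd p')" "fst (snd p') < \<delta>" "0 < snd (snd p')" "snd (snd p') < \<delta>"
      using pB' by (auto simp: B0_def)
    have qe: "h3_mult (h3_inv p) p' = (fst p' - fst p, fst (snd p') - fst (snd p),
       (snd (snd p') - snd (snd p)) - fst p * (fst (snd p') - fst (snd p)))"
      by (simp add: h3_mult_eq h3_inv_eq algebra_simps)
    have pp: "\<bar>fst p * (fst (snd p') - fst (snd p))\<bar> \<le> \<delta>"
    proof -
      have "\<bar>fst p * (fst (snd p') - fst (snd p))\<bar> = \<bar>fst p\<bar> * \<bar>fst (snd p') - fst (snd p)\<bar>" by (simp add: abs_mult)
      also have "\<dots> \<le> 1 * \<delta>" using hp hp' d1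
        by (intro mult_mono) auto
      finally show ?thesis by simp
    qed
    have "dist (h3_mult (h3_inv p) p') h3_one \<le> \<bar>fst p' - fst p\<bar> + \<bar>fst (snd p') - fst (snd p)\<bar> +
       \<bar>(snd (snd p') - snd (snd p)) - fst p * (fst (snd p') - fst (snd p))\<bar>"
      using norm3[of "h3_mult (h3_inv p) p'"] by (simp add: qe)
    also have "\<dots> < \<epsilon>" using hp hp' pp de by (simp add: abs_less_iff)
    finally have "dist (h3_mult (h3_inv \<gamma>) \<gamma>') h3_one < \<epsilon>" using q by simp
    then have "h3_mult (h3_inv \<gamma>) \<gamma>' = h3_one" using disc qG by force
    then have "\<gamma>' = \<gamma>" by (rule h3_eq_inv)
    then show ?thesis using kl \<gamma> \<gamma>' by simp
  qed
  have total: "(\<Sum>k<N. \<Sum>n. emeasure lborel (A k n)) \<le> emeasure lborel F" for N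
  proof -
    have "(\<Sum>k<N. \<Sum>n. emeasure lborel (A k n)) = (\<Sum>n. \<Sum>k<N. emeasure lborel (A k n))"
      by (rule suminf_sum[symmetric]) (rule summableI)
    also have "\<dots> = (\<Sum>n. emeasure lborel (\<Union>k\<in>{..<N}. A k n))"
    proof (intro suminf_cong sum_emeasure)
      fix n
      show "(\<lambda>k. A k n) ` {..<N} \<subseteq> sets lborel" using Ab by auto
      show "disjoint_family_on (\<lambda>k. A k n) {..<N}"
        unfolding disjoint_family_on_def using disj by blast
    qed simp
    also have "\<dots> = emeasure lborel (\<Union>n. \<Union>k\<in>{..<N}. A k n)"
    proof (rule suminf_emeasure)
      show "range (\<lambda>n. \<Union>k\<in>{..<N}. A k n) \<subseteq> sets lborel" using Ab by auto
      show "disjoint_family (\<lambda>n. \<Union>k\<in>{..<N}. A k n)"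
        unfolding disjoint_family_on_def using disj by blast
    qed
    also have "\<dots> \<le> emeasure lborel F"
      by (rule emeasure_mono) (use AF Fs in auto)
    finally show ?thesis .
  qed
  have NB: "of_nat N * ennreal (\<delta>^3) \<le> emeasure lborel F" for N
  proof -
    have "of_nat N * ennreal (\<delta>^3) = (\<Sum>k<N. ennreal (\<delta>^3))" by simp
    also have "\<dots> \<le> (\<Sum>k<N. \<Sum>n. emeasure lborel (A k n))" by (intro sum_mono Bk_le)
    finally show ?thesis using total by (rule order_trans)
  qed
  obtain r where r: "emeasure lborel F = ennreal r" "r \<ge> 0" using Ff
    by (cases "emeasure lborel F") auto
  define N where "N = nat (ceiling (r / \<delta>^3)) + 1"
  have "real N * \<delta>^3 > r"
  proof -
    have "real N > r / \<delta>^3" unfolding N_def by linarith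
    then show ?thesis using dpos by (simp add: pos_divide_less_eq)
  qed
  moreover have "ennreal (real N * \<delta>^3) \<le> ennreal r"
    using NB[of N] r dpos by (simp add: ennreal_mult ennreal_of_nat_eq_real_of_nat)
  ultimately show False using r dpos by (simp add: ennreal_le_iff)
qed


theorem proposition3p4:
  fixes \<Gamma> :: "nat \<Rightarrow> h3 set"
  assumes lat: "\<And>n. h3_lattice (\<Gamma> n)"
    and nested: "\<And>n. \<Gamma> (Suc n) \<subseteq> \<Gamma> n"
    and normal: "\<And>n. h3_normal_in (\<Gamma> n) (\<Gamma> 0)"
    and free: "odo_free \<Gamma>"
  shows "(\<Inter>n. h3_p ` \<Gamma> n) = {(0, 0)}"
proof
  have sub: "\<And>n. h3_subgroup (\<Gamma> n)" using lat by (simp add: h3_lattice_def)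
  show "{(0, 0)} \<subseteq> (\<Inter>n. h3_p ` \<Gamma> n)"
  proof -
    have "(0,0) \<in> h3_p ` \<Gamma> n" for n
      using sub_one[OF sub] by (force simp: h3_one_def)
    then show ?thesis by auto
  qed
  show "(\<Inter>n. h3_p ` \<Gamma> n) \<subseteq> {(0, 0)}"
  proof
    fix pr assume pr: "pr \<in> (\<Inter>n. h3_p ` \<Gamma> n)"
    obtain a b where ab: "pr = (a,b)" by (cases pr) auto
    show "pr \<in> {(0,0)}"
    proof (rule ccontr)
      assume "pr \<notin> {(0,0)}"
      then have abn: "(a,b) \<noteq> (0,0)" using ab by simp
      obtain \<gamma> where \<gamma>: "\<gamma> \<in> \<Gamma> 0" and e: "b * fst \<gamma> - a * fst (snd \<gamma>) \<noteq> 0"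
        using lattice_phi[OF lat abn] by blast
      have zin: "(0, 0, b * fst \<gamma> - a * fst (snd \<gamma>)) \<in> \<Gamma> n" for n
      proof -
        have "(a,b) \<in> h3_p ` \<Gamma> n" using pr ab by auto
        then obtain \<gamma>n where gn: "\<gamma>n \<in> \<Gamma> n" "h3_p \<gamma>n = (a,b)" by (auto simp del: h3_p.simps)
        have gn2: "fst \<gamma>n = a" "fst (snd \<gamma>n) = b" using gn(2) by (auto simp: h3_p_eq)
        have "h3_mult (h3_mult \<gamma> \<gamma>n) (h3_inv \<gamma>) \<in> \<Gamma> n"
          using normal[of n] \<gamma> gn(1) by (simp add: h3_normal_in_def)
        then have "h3_mult (h3_mult (h3_mult \<gamma> \<gamma>n) (h3_inv \<gamma>)) (h3_inv \<gamma>n) \<in> \<Gamma> n"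
          using sub_mult[OF sub _ sub_inv[OF sub gn(1)]] by blast
        moreover have "h3_mult (h3_mult (h3_mult \<gamma> \<gamma>n) (h3_inv \<gamma>)) (h3_inv \<gamma>n)
            = (0, 0, b * fst \<gamma> - a * fst (snd \<gamma>))"
          by (simp add: h3_mult_eq h3_inv_eq gn2[symmetric] algebra_simps)
        ultimately show ?thesis by simp
      qed
      show False by (rule central_not_free[OF sub e zin free])
    qed
  qed
qed

end
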